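(* Let $N,K,S,E$ be positive integers with $S\le K$, let $\mathcal{K}=\{1,\dots,K\}$, $\mathcal{S}=\{1,\dots,S\}$, $\mathcal{M}=\{S+1,\dots,K\}$, $\mathcal{E}=\{1,\dots,E\}$. Let $\mathbf{h}_1,\dots,\mathbf{h}_K\in\mathbb{C}^N$, $\mathbf{g}_1,\dots,\mathbf{g}_E\in\mathbb{C}^N$, $\sigma^2,\sigma_{\mathsf e}^2,P>0$ and $\alpha>0$. For $j\in\{1,\dots,K+1\}$ let $\mathbf{e}_j\in\mathbb{R}^{K+1}$ be the $j$-th standard basis vector and $\mathrm{diag}\{\mathbf{v}\}$ the diagonal matrix with diagonal $\mathbf{v}$. Define the $N(K+1)\times N(K+1)$ Hermitian matrices $\mathbf{A}_{\mathsf c,k}=\mathbf{I}_{K+1}\otimes\mathbf{h}_k\mathbf{h}_k^{\mathsf H}+\frac{\sigma^2}{P}\mathbf{I}_{N(K+1)}$, $\mathbf{B}_{\mathsf c,k}=\mathbf{A}_{\mathsf c,k}-\mathrm{diag}\{\mathbf{e}_1\}\otimes\mathbf{h}_k\mathbf{h}_k^{\mathsf H}$, $\mathbf{A}_k=(\mathbf{I}_{K+1}-\mathrm{diag}\{\mathbf{e}_1\})\otimes\mathbf{h}_k\mathbf{h}_k^{\mathsf H}+\frac{\sigma^2}{P}\mathbf{I}_{N(K+1)}$, $\mathbf{B}_k=\mathbf{A}_k-\mathrm{diag}\{\mathbf{e}_{k+1}\}\otimes\mathbf{h}_k\mathbf{h}_k^{\mathsf H}$ for $k\in\mathcal{K}$;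 $\mathbf{A}^{(s)}_{\mathsf e}=\mathbf{I}_{K+1}\otimes\mathbf{g}_{\mathsf e}\mathbf{g}_{\mathsf e}^{\mathsf H}+\frac{\sigma_{\mathsf e}^2}{P}\mathbf{I}_{N(K+1)}$, $\mathbf{B}^{(s)}_{\mathsf e}=\mathbf{A}^{(s)}_{\mathsf e}-\mathrm{diag}\{\mathbf{e}_{s+1}\}\otimes\mathbf{g}_{\mathsf e}\mathbf{g}_{\mathsf e}^{\mathsf H}$ for $s\in\mathcal{S},\mathsf e\in\mathcal{E}$; $\mathbf{C}^{(s)}_u=(\mathbf{I}_{K+1}-\mathrm{diag}\{\mathbf{e}_1+\mathbf{e}_{u+1}\})\otimes\mathbf{h}_u\mathbf{h}_u^{\mathsf H}+\frac{\sigma^2}{P}\mathbf{I}_{N(K+1)}$, $\mathbf{D}^{(s)}_u=\mathbf{C}^{(s)}_u-\mathrm{diag}\{\mathbf{e}_{s+1}\}\otimes\mathbf{h}_u\mathbf{h}_u^{\mathsf H}$ for $s\in\mathcal{S},u\in\mathcal{K}\setminus\{s\}$. For nonzero $\bar{\mathbf f}\in\mathbb{C}^{N(K+1)}$ write $r_X(\bar{\mathbf f})=\frac{\bar{\mathbf f}^{\mathsf H}\mathbf{X}\bar{\mathbf f}}{\bar{\mathbf f}^{\mathsf H}\mathbf{Y}\bar{\mathbf f}}$ for the relevant pair, and set $w_{\mathsf c,k}(\bar{\mathbf f})=\big(\frac{\bar{\mathbf f}^{\mathsf H}\mathbf{A}_{\mathsf c,k}\bar{\mathbf f}}{\bar{\mathbf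 f}^{\mathsf H}\mathbf{B}_{\mathsf c,k}\bar{\mathbf f}}\big)^{-\frac{1}{\alpha\ln 2}}$, $w^{(s)}_{\mathsf e}(\bar{\mathbf f})=\big(\frac{\bar{\mathbf f}^{\mathsf H}\mathbf{A}^{(s)}_{\mathsf e}\bar{\mathbf f}}{\bar{\mathbf f}^{\mathsf H}\mathbf{B}^{(s)}_{\mathsf e}\bar{\mathbf f}}\big)^{\frac{1}{\alpha\ln 2}}$, $w^{(s)}_u(\bar{\mathbf f})=\big(\frac{\bar{\mathbf f}^{\mathsf H}\mathbf{C}^{(s)}_u\bar{\mathbf f}}{\bar{\mathbf f}^{\mathsf H}\mathbf{D}^{(s)}_u\bar{\mathbf f}}\big)^{\frac{1}{\alpha\ln 2}}$, and $W^{(s)}(\bar{\mathbf f})=\sum_{i\in\mathcal{E}}w^{(s)}_i(\bar{\mathbf f})+\sum_{i\in\mathcal{K}\setminus\{s\}}w^{(s)}_i(\bar{\mathbf f})$. Consider the objective $$L(\bar{\mathbf f})=-\alpha\ln\Big(\sum_{k\in\mathcal{K}}w_{\mathsf c,k}(\bar{\mathbf f})\Big)+\sum_{s\in\mathcal{S}}\Big[\log_2\frac{\bar{\mathbf f}^{\mathsf H}\mathbf{A}_s\bar{\mathbf f}}{\bar{\mathbf f}^{\mathsf H}\mathbf{B}_s\bar{\mathbf f}}-\alpha\ln W^{(s)}(\bar{\mathbf f})\Big]+\sum_{m\in\mathcal{M}}\log_2\frac{\bar{\mathbf f}^{\mathsf H}\mathbf{A}_m\bar{\mathbf f}}{\bar{\mathbf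 f}^{\mathsf H}\mathbf{B}_m\bar{\mathbf f}}.$$ Define $$\lambda(\bar{\mathbf f})=\Big[\sum_{k\in\mathcal{K}}w_{\mathsf c,k}(\bar{\mathbf f})\Big]^{-\alpha}\Big[\prod_{s\in\mathcal{S}}\Big(\frac{\bar{\mathbf f}^{\mathsf H}\mathbf{A}_s\bar{\mathbf f}}{\bar{\mathbf f}^{\mathsf H}\mathbf{B}_s\bar{\mathbf f}}\Big)^{\frac1{\ln2}}-\prod_{s\in\mathcal{S}}\big(W^{(s)}(\bar{\mathbf f})\big)^{\alpha}\Big]\prod_{m\in\mathcal{M}}\Big(\frac{\bar{\mathbf f}^{\mathsf H}\mathbf{A}_m\bar{\mathbf f}}{\bar{\mathbf f}^{\mathsf H}\mathbf{B}_m\bar{\mathbf f}}\Big)^{\frac1{\ln2}},$$ let $\lambda_{\mathsf{num}}(\bar{\mathbf f}),\lambda_{\mathsf{den}}(\bar{\mathbf f})$ be any scalar functions with $\lambda(\bar{\mathbf f})=\lambda_{\mathsf{num}}(\bar{\mathbf f})/\lambda_{\mathsf{den}}(\bar{\mathbf f})$, and define $$\mathbf{A}_{\mathsf{KKT}}(\bar{\mathbf f})=\lambda_{\mathsf{num}}(\bar{\mathbf f})\Big[\sum_{k\in\mathcal{K}}\frac{w_{\mathsf c,k}}{\sum_{l\in\mathcal{K}}w_{\mathsf c,l}}\frac{\mathbf{A}_{\mathsf c,k}}{\bar{\mathbf f}^{\mathsf H}\mathbf{A}_{\mathsf c,k}\bar{\mathbf f}}+\sum_{s\in\mathcal{S}}\frac{\mathbf{A}_s}{\bar{\mathbf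 f}^{\mathsf H}\mathbf{A}_s\bar{\mathbf f}}+\sum_{s\in\mathcal{S}}\frac{\sum_{\mathsf e\in\mathcal{E}}w^{(s)}_{\mathsf e}\frac{\mathbf{B}^{(s)}_{\mathsf e}}{\bar{\mathbf f}^{\mathsf H}\mathbf{B}^{(s)}_{\mathsf e}\bar{\mathbf f}}+\sum_{u\in\mathcal{K}\setminus\{s\}}w^{(s)}_u\frac{\mathbf{D}^{(s)}_u}{\bar{\mathbf f}^{\mathsf H}\mathbf{D}^{(s)}_u\bar{\mathbf f}}}{W^{(s)}}+\sum_{m\in\mathcal{M}}\frac{\mathbf{A}_m}{\bar{\mathbf f}^{\mathsf H}\mathbf{A}_m\bar{\mathbf f}}\Big],$$ $$\mathbf{B}_{\mathsf{KKT}}(\bar{\mathbf f})=\lambda_{\mathsf{den}}(\bar{\mathbf f})\Big[\sum_{k\in\mathcal{K}}\frac{w_{\mathsf c,k}}{\sum_{l\in\mathcal{K}}w_{\mathsf c,l}}\frac{\mathbf{B}_{\mathsf c,k}}{\bar{\mathbf f}^{\mathsf H}\mathbf{B}_{\mathsf c,k}\bar{\mathbf f}}+\sum_{s\in\mathcal{S}}\frac{\mathbf{B}_s}{\bar{\mathbf f}^{\mathsf H}\mathbf{B}_s\bar{\mathbf f}}+\sum_{s\in\mathcal{S}}\frac{\sum_{\mathsf e\in\mathcal{E}}w^{(s)}_{\mathsf e}\frac{\mathbf{A}^{(s)}_{\mathsf e}}{\bar{\mathbf f}^{\mathsf H}\mathbf{A}^{(s)}_{\mathsf e}\bar{\mathbf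 f}}+\sum_{u\in\mathcal{K}\setminus\{s\}}w^{(s)}_u\frac{\mathbf{C}^{(s)}_u}{\bar{\mathbf f}^{\mathsf H}\mathbf{C}^{(s)}_u\bar{\mathbf f}}}{W^{(s)}}+\sum_{m\in\mathcal{M}}\frac{\mathbf{B}_m}{\bar{\mathbf f}^{\mathsf H}\mathbf{B}_m\bar{\mathbf f}}\Big],$$ all weights evaluated at $\bar{\mathbf f}$. Then the first-order optimality condition of maximizing $L$ over $\bar{\mathbf f}$ (ignoring the power constraint $\|\bar{\mathbf f}\|^2=1$), namely $\partial L(\bar{\mathbf f})/\partial\bar{\mathbf f}^{\mathsf H}=\mathbf{0}$, is satisfied at $\bar{\mathbf f}$ if $$\mathbf{B}_{\mathsf{KKT}}^{-1}(\bar{\mathbf f})\,\mathbf{A}_{\mathsf{KKT}}(\bar{\mathbf f})\,\bar{\mathbf f}=\lambda(\bar{\mathbf f})\,\bar{\mathbf f}.$$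
   Context: This arises from secure rate-splitting precoding in a downlink MIMO system: $\bar{\mathbf f}=[\mathbf f_{\mathsf c}^{\mathsf T},\mathbf f_1^{\mathsf T},\dots,\mathbf f_K^{\mathsf T}]^{\mathsf T}$ stacks the common-stream precoder and the $K$ private-stream precoders; users in $\mathcal S$ are secret users, users in $\mathcal M$ are normal users, $\mathbf h_k$ are user channels and $\mathbf g_{\mathsf e}$ eavesdropper channels. $L$ is the sum secrecy spectral-efficiency objective in which the minimum over common-stream rates and the maximum over leakage rates are replaced by their LogSumExp smoothings. $\otimes$ is the Kronecker product, $(\cdot)^{\mathsf H}$ the conjugate transpose, and $\partial/\partial\bar{\mathbf f}^{\mathsf H}$ the Wirtinger derivative.
   Formalization: The first-order optimality condition follows from the eigenvector equation only at points $\bar{\mathbf f}$ with $\lambda(\bar{\mathbf f})\neq 0$. The statement above fails without it. *)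

theory Defs
  imports Complex_Main
begin

text \<open>A vector in C^(N(K+1)) is a function nat => complex of which only the
entries with index < N*(K+1) matter; an N(K+1) x N(K+1) matrix is a function
nat => nat => complex of which only entries with indices < N*(K+1) matter.
Index i corresponds to block i div N (block 0 = common stream f_c, block k = private
stream f_k) and position i mod N inside the block. Thus the j-th standard basis vector
e_j of R^(K+1) (j = 1..K+1) corresponds to block j-1. Channels: h k (k = 1..K) and
g e (e = 1..E) are vectors in C^N given as functions nat => complex (entries < N).\<close>

type_synonym cvec = "nat \<Rightarrow> complex"
type_synonym cmat = "nat \<Rightarrow> nat \<Rightarrow> complex"

text \<open>diag(d) (Kronecker product) M, for d indexed by blocks 0..K and M an N x N matrix.\<close>
definition kron :: "nat \<Rightarrow> (nat \<Rightarrow> real) \<Rightarrow> cmat \<Rightarrow> cmat" where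
  "kron N d M = (\<lambda>i j. if i div N = j div N
                        then complex_of_real (d (i div N)) * M (i mod N) (j mod N) else 0)"

definition outer :: "cvec \<Rightarrow> cmat" where
  "outer v = (\<lambda>a b. v a * cnj (v b))"

definition noise :: "real \<Rightarrow> cmat" where
  "noise c = (\<lambda>i j. if i = j then complex_of_real c else 0)"

text \<open>Quadratic form f^H X f (real for Hermitian X; we take its real part).\<close>
definition qf :: "nat \<Rightarrow> cmat \<Rightarrow> cvec \<Rightarrow> real" where
  "qf n X f = Re (\<Sum>i<n. \<Sum>j<n. cnj (f i) * X i j * f j)"

definition ratio :: "nat \<Rightarrow> cmat \<Rightarrow> cmat \<Rightarrow> cvec \<Rightarrow> real" where
  "ratio n X Y f = qf n X f / qf n Y f"

text \<open>The matrices (c stands for sigma^2/P resp. sigma_e^2/P).\<close>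
definition Ac :: "nat \<Rightarrow> (nat \<Rightarrow> cvec) \<Rightarrow> real \<Rightarrow> nat \<Rightarrow> cmat" where
  "Ac N h c k = (\<lambda>i j. kron N (\<lambda>_. 1) (outer (h k)) i j + noise c i j)"
definition Bc :: "nat \<Rightarrow> (nat \<Rightarrow> cvec) \<Rightarrow> real \<Rightarrow> nat \<Rightarrow> cmat" where
  "Bc N h c k = (\<lambda>i j. Ac N h c k i j - kron N (\<lambda>b. if b = 0 then 1 else 0) (outer (h k)) i j)"
definition Ap :: "nat \<Rightarrow> (nat \<Rightarrow> cvec) \<Rightarrow> real \<Rightarrow> nat \<Rightarrow> cmat" where
  "Ap N h c k = (\<lambda>i j. kron N (\<lambda>b. if b = 0 then 0 else 1) (outer (h k)) i j + noise c i j)"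
definition Bp :: "nat \<Rightarrow> (nat \<Rightarrow> cvec) \<Rightarrow> real \<Rightarrow> nat \<Rightarrow> cmat" where
  "Bp N h c k = (\<lambda>i j. Ap N h c k i j - kron N (\<lambda>b. if b = k then 1 else 0) (outer (h k)) i j)"
definition Ae :: "nat \<Rightarrow> (nat \<Rightarrow> cvec) \<Rightarrow> real \<Rightarrow> nat \<Rightarrow> cmat" where
  "Ae N g ce e = (\<lambda>i j. kron N (\<lambda>_. 1) (outer (g e)) i j + noise ce i j)"
definition Be :: "nat \<Rightarrow> (nat \<Rightarrow> cvec) \<Rightarrow> real \<Rightarrow> nat \<Rightarrow> nat \<Rightarrow> cmat" where
  "Be N g ce s e = (\<lambda>i j. Ae N g ce e i j - kron N (\<lambda>b. if b = s then 1 else 0) (outer (g e)) i j)"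
definition Cu :: "nat \<Rightarrow> (nat \<Rightarrow> cvec) \<Rightarrow> real \<Rightarrow> nat \<Rightarrow> cmat" where
  "Cu N h c u = (\<lambda>i j. kron N (\<lambda>b. if b = 0 \<or> b = u then 0 else 1) (outer (h u)) i j + noise c i j)"
definition Du :: "nat \<Rightarrow> (nat \<Rightarrow> cvec) \<Rightarrow> real \<Rightarrow> nat \<Rightarrow> nat \<Rightarrow> cmat" where
  "Du N h c s u = (\<lambda>i j. Cu N h c u i j - kron N (\<lambda>b. if b = s then 1 else 0) (outer (h u)) i j)"

definition wc :: "nat \<Rightarrow> nat \<Rightarrow> (nat \<Rightarrow> cvec) \<Rightarrow> real \<Rightarrow> real \<Rightarrow> cvec \<Rightarrow> nat \<Rightarrow> real" where
  "wc N K h c \<alpha> f k = ratio (N*(K+1)) (Ac N h c k) (Bc N h c k) f powr (- 1 / (\<alpha> * ln 2))"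
definition we :: "nat \<Rightarrow> nat \<Rightarrow> (nat \<Rightarrow> cvec) \<Rightarrow> real \<Rightarrow> real \<Rightarrow> cvec \<Rightarrow> nat \<Rightarrow> nat \<Rightarrow> real" where
  "we N K g ce \<alpha> f s e = ratio (N*(K+1)) (Ae N g ce e) (Be N g ce s e) f powr (1 / (\<alpha> * ln 2))"
definition wu :: "nat \<Rightarrow> nat \<Rightarrow> (nat \<Rightarrow> cvec) \<Rightarrow> real \<Rightarrow> real \<Rightarrow> cvec \<Rightarrow> nat \<Rightarrow> nat \<Rightarrow> real" where
  "wu N K h c \<alpha> f s u = ratio (N*(K+1)) (Cu N h c u) (Du N h c s u) f powr (1 / (\<alpha> * ln 2))"
definition Wsum :: "nat \<Rightarrow> nat \<Rightarrow> nat \<Rightarrow> (nat \<Rightarrow> cvec) \<Rightarrow> (nat \<Rightarrow> cvec) \<Rightarrow> real \<Rightarrow> real \<Rightarrow> real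
                    \<Rightarrow> cvec \<Rightarrow> nat \<Rightarrow> real" where
  "Wsum N K E h g c ce \<alpha> f s =
     (\<Sum>e\<in>{1..E}. we N K g ce \<alpha> f s e) + (\<Sum>u\<in>{1..K} - {s}. wu N K h c \<alpha> f s u)"

definition Lobj :: "nat \<Rightarrow> nat \<Rightarrow> nat \<Rightarrow> nat \<Rightarrow> (nat \<Rightarrow> cvec) \<Rightarrow> (nat \<Rightarrow> cvec) \<Rightarrow> real \<Rightarrow> real
                    \<Rightarrow> real \<Rightarrow> cvec \<Rightarrow> real" where
  "Lobj N K S E h g c ce \<alpha> f =
     - \<alpha> * ln (\<Sum>k\<in>{1..K}. wc N K h c \<alpha> f k)
     + (\<Sum>s\<in>{1..S}. log 2 (ratio (N*(K+1)) (Ap N h c s) (Bp N h c s) f)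
                     - \<alpha> * ln (Wsum N K E h g c ce \<alpha> f s))
     + (\<Sum>m\<in>{S+1..K}. log 2 (ratio (N*(K+1)) (Ap N h c m) (Bp N h c m) f))"

definition lam :: "nat \<Rightarrow> nat \<Rightarrow> nat \<Rightarrow> nat \<Rightarrow> (nat \<Rightarrow> cvec) \<Rightarrow> (nat \<Rightarrow> cvec) \<Rightarrow> real \<Rightarrow> real
                    \<Rightarrow> real \<Rightarrow> cvec \<Rightarrow> real" where
  "lam N K S E h g c ce \<alpha> f =
     (\<Sum>k\<in>{1..K}. wc N K h c \<alpha> f k) powr (- \<alpha>)
     * ((\<Prod>s\<in>{1..S}. ratio (N*(K+1)) (Ap N h c s) (Bp N h c s) f powr (1 / ln 2))
        - (\<Prod>s\<in>{1..S}. Wsum N K E h g c ce \<alpha> f s powr \<alpha>))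
     * (\<Prod>m\<in>{S+1..K}. ratio (N*(K+1)) (Ap N h c m) (Bp N h c m) f powr (1 / ln 2))"

definition term_mat :: "real \<Rightarrow> nat \<Rightarrow> cmat \<Rightarrow> cvec \<Rightarrow> cmat" where
  "term_mat w n X f = (\<lambda>i j. complex_of_real (w / qf n X f) * X i j)"

definition AKKT :: "nat \<Rightarrow> nat \<Rightarrow> nat \<Rightarrow> nat \<Rightarrow> (nat \<Rightarrow> cvec) \<Rightarrow> (nat \<Rightarrow> cvec) \<Rightarrow> real \<Rightarrow> real
                    \<Rightarrow> real \<Rightarrow> complex \<Rightarrow> cvec \<Rightarrow> cmat" where
  "AKKT N K S E h g c ce \<alpha> lnum f = (let n = N*(K+1) in (\<lambda>i j. lnum *
     ((\<Sum>k\<in>{1..K}. term_mat (wc N K h c \<alpha> f k / (\<Sum>l\<in>{1..K}. wc N K h c \<alpha> f l)) n (Ac N h c k) f i j)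
    + (\<Sum>s\<in>{1..S}. term_mat 1 n (Ap N h c s) f i j)
    + (\<Sum>s\<in>{1..S}. complex_of_real (1 / Wsum N K E h g c ce \<alpha> f s) *
         ((\<Sum>e\<in>{1..E}. term_mat (we N K g ce \<alpha> f s e) n (Be N g ce s e) f i j)
        + (\<Sum>u\<in>{1..K} - {s}. term_mat (wu N K h c \<alpha> f s u) n (Du N h c s u) f i j)))
    + (\<Sum>m\<in>{S+1..K}. term_mat 1 n (Ap N h c m) f i j))))"

definition BKKT :: "nat \<Rightarrow> nat \<Rightarrow> nat \<Rightarrow> nat \<Rightarrow> (nat \<Rightarrow> cvec) \<Rightarrow> (nat \<Rightarrow> cvec) \<Rightarrow> real \<Rightarrow> real
                    \<Rightarrow> real \<Rightarrow> complex \<Rightarrow> cvec \<Rightarrow> cmat" where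
  "BKKT N K S E h g c ce \<alpha> lden f = (let n = N*(K+1) in (\<lambda>i j. lden *
     ((\<Sum>k\<in>{1..K}. term_mat (wc N K h c \<alpha> f k / (\<Sum>l\<in>{1..K}. wc N K h c \<alpha> f l)) n (Bc N h c k) f i j)
    + (\<Sum>s\<in>{1..S}. term_mat 1 n (Bp N h c s) f i j)
    + (\<Sum>s\<in>{1..S}. complex_of_real (1 / Wsum N K E h g c ce \<alpha> f s) *
         ((\<Sum>e\<in>{1..E}. term_mat (we N K g ce \<alpha> f s e) n (Ae N g ce e) f i j)
        + (\<Sum>u\<in>{1..K} - {s}. term_mat (wu N K h c \<alpha> f s u) n (Cu N h c u) f i j)))
    + (\<Sum>m\<in>{S+1..K}. term_mat 1 n (Bp N h c m) f i j))))"

definition mvec :: "nat \<Rightarrow> cmat \<Rightarrow> cvec \<Rightarrow> cvec" where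
  "mvec n X v = (\<lambda>i. \<Sum>j<n. X i j * v j)"

definition is_inverse :: "nat \<Rightarrow> cmat \<Rightarrow> cmat \<Rightarrow> bool" where
  "is_inverse n Xi X \<longleftrightarrow> (\<forall>i<n. \<forall>j<n.
      (\<Sum>k<n. Xi i k * X k j) = (if i = j then 1 else 0) \<and>
      (\<Sum>k<n. X i k * Xi k j) = (if i = j then 1 else 0))"

text \<open>Wirtinger derivative dL/d(conj f) of a real-valued function L of a complex
n-vector, componentwise: dL/d(conj f_i) = (dL/dx_i + i dL/dy_i)/2, where f_i = x_i + i y_i.
has_wirtinger_conj_grad n L f G means these partial derivatives exist at f and equal G.\<close>
definition has_wirtinger_conj_grad :: "nat \<Rightarrow> (cvec \<Rightarrow> real) \<Rightarrow> cvec \<Rightarrow> cvec \<Rightarrow> bool" where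
  "has_wirtinger_conj_grad n L f G \<longleftrightarrow> (\<forall>i<n. \<exists>dx dy.
      ((\<lambda>t. L (f(i := f i + complex_of_real t))) has_real_derivative dx) (at 0) \<and>
      ((\<lambda>t. L (f(i := f i + \<i> * complex_of_real t))) has_real_derivative dy) (at 0) \<and>
      G i = (complex_of_real dx + \<i> * complex_of_real dy) / 2)"

end

theory Submission
  imports Defs
begin


definition KN :: "nat \<Rightarrow> (nat \<Rightarrow> real) \<Rightarrow> cvec \<Rightarrow> real \<Rightarrow> cmat" where
  "KN N d v c = (\<lambda>a b. kron N d (outer v) a b + noise c a b)"

definition herm :: "nat \<Rightarrow> cmat \<Rightarrow> bool" where
  "herm n X \<longleftrightarrow> (\<forall>a<n. \<forall>b<n. X b a = cnj (X a b))"

lemma herm_KN: "herm n (KN N d v c)"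
  unfolding herm_def KN_def kron_def outer_def noise_def by auto

lemma qf_add: "qf n (\<lambda>a b. X a b + Y a b) f = qf n X f + qf n Y f"
  unfolding qf_def by (simp add: distrib_left distrib_right sum.distrib)

lemma qf_noise: "qf n (noise c) f = c * (\<Sum>a<n. (cmod (f a))^2)"
proof -
  have "qf n (noise c) f = Re (\<Sum>a<n. cnj (f a) * complex_of_real c * f a)"
    unfolding qf_def noise_def by (simp add: if_distrib if_distribR cong: if_cong)
  also have "\<dots> = (\<Sum>a<n. c * (cmod (f a))^2)"
    by (simp add: complex_mult_cnj cmod_power2 mult.commute mult.left_commute)
  finally show ?thesis by (simp add: sum_distrib_left cmod_power2)
qed

lemma qf_kron_nonneg:
  assumes "\<And>b. d b \<ge> 0"
  shows "qf n (kron N d (outer v)) f \<ge> 0"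
proof -
  define p where "p = (\<lambda>a::nat. a div N)"
  define u where "u = (\<lambda>a. cnj (f a) * v (a mod N))"
  define T where "T = (\<lambda>\<beta>. \<Sum>b\<in>{b. b \<in> {..<n} \<and> p b = \<beta>}. u b)"
  have "(\<Sum>a<n. \<Sum>b<n. cnj (f a) * kron N d (outer v) a b * f b)
      = (\<Sum>a<n. \<Sum>b<n. if p a = p b then complex_of_real (d (p a)) * u a * cnj (u b) else 0)"
    unfolding kron_def outer_def p_def u_def
    by (intro sum.cong refl) (auto simp: algebra_simps)
  also have "\<dots> = (\<Sum>a<n. complex_of_real (d (p a)) * u a * cnj (T (p a)))"
    unfolding T_def
    by (intro sum.cong refl) (simp add: sum.inter_filter[symmetric] sum_distrib_left cnj_sum Int_def conj_commute eq_commute)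
  also have "\<dots> = (\<Sum>\<beta>\<in>p ` {..<n}. \<Sum>a\<in>{a. a \<in> {..<n} \<and> p a = \<beta>}. complex_of_real (d (p a)) * u a * cnj (T (p a)))"
    by (rule sum.image_gen) simp
  also have "\<dots> = (\<Sum>\<beta>\<in>p ` {..<n}. complex_of_real (d \<beta>) * (T \<beta> * cnj (T \<beta>)))"
    unfolding T_def
  proof (intro sum.cong refl)
    fix x assume "x \<in> p ` {..<n}"
    show "(\<Sum>a\<in>{a \<in> {..<n}. p a = x}. complex_of_real (d (p a)) * u a * cnj (\<Sum>b\<in>{b \<in> {..<n}. p b = p a}. u b)) =
        complex_of_real (d x) * ((\<Sum>b\<in>{b \<in> {..<n}. p b = x}. u b) * cnj (\<Sum>b\<in>{b \<in> {..<n}. p b = x}. u b))"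
      by (simp add: sum_distrib_left sum_distrib_right cnj_sum mult.assoc) (rule sum.swap)
  qed
  also have "\<dots> = (\<Sum>\<beta>\<in>p ` {..<n}. complex_of_real (d \<beta> * (cmod (T \<beta>))^2))"
    by (simp add: complex_mult_cnj cmod_power2)
  finally show ?thesis unfolding qf_def using assms by (simp add: sum_nonneg)
qed

lemma qf_KN_pos:
  assumes "\<And>b. d b \<ge> 0" "c > 0" "\<exists>a<n. f a \<noteq> 0"
  shows "qf n (KN N d v c) f > 0"
proof -
  obtain a where a: "a < n" "f a \<noteq> 0" using assms by auto
  have "(\<Sum>a<n. (cmod (f a))^2) > 0"
    by (rule sum_pos2[of _ a]) (use a in auto)
  then have "qf n (noise c) f > 0" using assms by (simp add: qf_noise)
  moreover have "qf n (kron N d (outer v)) f \<ge> 0" by (rule qf_kron_nonneg) (rule assms(1))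
  ultimately show ?thesis unfolding KN_def qf_add by linarith
qed



definition pert :: "cvec \<Rightarrow> nat \<Rightarrow> complex \<Rightarrow> real \<Rightarrow> cvec" where
  "pert f i z t = f(i := f i + z * complex_of_real t)"

definition mvi :: "nat \<Rightarrow> cmat \<Rightarrow> cvec \<Rightarrow> nat \<Rightarrow> complex" where
  "mvi n X f i = (\<Sum>j<n. X i j * f j)"

definition ell :: "complex \<Rightarrow> complex \<Rightarrow> real" where
  "ell z w = 2 * Re (cnj z * w)"

definition Dq :: "nat \<Rightarrow> cmat \<Rightarrow> cvec \<Rightarrow> nat \<Rightarrow> complex \<Rightarrow> real" where
  "Dq n X f i z = ell z (mvi n X f i)"

lemma sum_if_const: "(\<Sum>b\<in>B. if P then g b else 0) = (if P then sum g B else 0)"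
  by simp

lemma dsum_poly: fixes t s :: "'x::comm_ring_1" shows "(\<Sum>a\<in>A. \<Sum>b\<in>B. P a b + t * (Q a b + R a b) + s * S a b) = 
   (\<Sum>a\<in>A. \<Sum>b\<in>B. P a b) + t * ((\<Sum>a\<in>A. \<Sum>b\<in>B. Q a b) + (\<Sum>a\<in>A. \<Sum>b\<in>B. R a b)) + s * (\<Sum>a\<in>A. \<Sum>b\<in>B. S a b)"
  by (simp add: sum.distrib sum_distrib_left distrib_left)

lemma qf_pert_poly:
  assumes "i < n" "herm n X"
  shows "qf n X (pert f i z t) = qf n X f + t * Dq n X f i z
     + t^2 * Re (cnj z * X i i * z)"
proof -
  define \<delta> where "\<delta> = (\<lambda>a. if a = i then z else 0)"
  have p: "pert f i z t a = f a + complex_of_real t * \<delta> a" for a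
    unfolding pert_def \<delta>_def by auto
  have "(\<Sum>a<n. \<Sum>b<n. cnj (pert f i z t a) * X a b * pert f i z t b)
     = (\<Sum>a<n. \<Sum>b<n. cnj (f a) * X a b * f b)
       + complex_of_real t * ((\<Sum>a<n. \<Sum>b<n. cnj (\<delta> a) * X a b * f b) + (\<Sum>a<n. \<Sum>b<n. cnj (f a) * X a b * \<delta> b))
       + (complex_of_real t)^2 * (\<Sum>a<n. \<Sum>b<n. cnj (\<delta> a) * X a b * \<delta> b)"
  proof -
    have pt: "cnj (pert f i z t a) * X a b * pert f i z t b = cnj (f a) * X a b * f b
       + complex_of_real t * (cnj (\<delta> a) * X a b * f b + cnj (f a) * X a b * \<delta> b)
       + (complex_of_real t)^2 * (cnj (\<delta> a) * X a b * \<delta> b)" for a b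
      unfolding p by (simp add: algebra_simps power2_eq_square)
    show ?thesis unfolding pt by (rule dsum_poly)
  qed
  moreover have "(\<Sum>a<n. \<Sum>b<n. cnj (\<delta> a) * X a b * f b) = cnj z * mvi n X f i"
  proof -
    have "(\<Sum>a<n. \<Sum>b<n. cnj (\<delta> a) * X a b * f b) = (\<Sum>a<n. if a = i then cnj z * mvi n X f i else 0)"
      by (intro sum.cong refl) (simp add: \<delta>_def mvi_def sum_distrib_left mult.assoc)
    then show ?thesis using assms(1) by simp
  qed
  moreover have "(\<Sum>a<n. \<Sum>b<n. cnj (f a) * X a b * \<delta> b) = z * cnj (mvi n X f i)"
  proof -
    have "(\<Sum>a<n. \<Sum>b<n. cnj (f a) * X a b * \<delta> b) = (\<Sum>a<n. cnj (f a) * X a i * z)"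
    proof (intro sum.cong refl)
      fix a
      have "(\<Sum>b<n. cnj (f a) * X a b * \<delta> b) = (\<Sum>b<n. if b = i then cnj (f a) * X a i * z else 0)"
        by (intro sum.cong refl) (simp add: \<delta>_def)
      then show "(\<Sum>b<n. cnj (f a) * X a b * \<delta> b) = cnj (f a) * X a i * z" using assms(1) by simp
    qed
    also have "\<dots> = (\<Sum>a<n. z * cnj (X i a * f a))"
    proof (intro sum.cong refl)
      fix a assume "a \<in> {..<n}"
      then have "X a i = cnj (X i a)" using assms unfolding herm_def by blast
      then show "cnj (f a) * X a i * z = z * cnj (X i a * f a)" by simp
    qed
    finally show ?thesis unfolding mvi_def by (simp add: sum_distrib_left cnj_sum)
  qed
  moreover have "(\<Sum>a<n. \<Sum>b<n. cnj (\<delta> a) * X a b * \<delta> b) = cnj z * X i i * z"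
  proof -
    have "(\<Sum>b<n. cnj (\<delta> i) * X i b * \<delta> b) = (\<Sum>b<n. if b = i then cnj z * X i i * z else 0)"
      by (intro sum.cong refl) (simp add: \<delta>_def)
    then have "(\<Sum>b<n. cnj (\<delta> i) * X i b * \<delta> b) = cnj z * X i i * z" using assms(1) by simp
    then have "(\<Sum>a<n. \<Sum>b<n. cnj (\<delta> a) * X a b * \<delta> b) = (\<Sum>a<n. if a = i then cnj z * X i i * z else 0)"
      by (intro sum.cong refl) (simp add: \<delta>_def)
    then show ?thesis using assms(1) by simp
  qed
  moreover have "Re (z * cnj w) = Re (cnj z * w)" for w
    by simp
  ultimately show ?thesis
    unfolding qf_def Dq_def ell_def
    by (simp add: power2_eq_square)
qed

lemma qf_pert_deriv:
  assumes "i < n" "herm n X"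
  shows "((\<lambda>t. qf n X (pert f i z t)) has_real_derivative Dq n X f i z) (at 0)"
proof -
  have e: "(\<lambda>t. qf n X (pert f i z t)) = (\<lambda>t. qf n X f + t * Dq n X f i z
     + t^2 * Re (cnj z * X i i * z))"
    using qf_pert_poly[OF assms] by auto
  show ?thesis unfolding e
    by (auto intro!: derivative_eq_intros)
qed

lemma qf_pert0: "qf n X (pert f i z 0) = qf n X f"
  unfolding pert_def by simp



lemma pert0[simp]: "pert f i z 0 = f"
  unfolding pert_def by simp

lemma deriv_eq: "(f has_real_derivative a) F \<Longrightarrow> a = b \<Longrightarrow> (f has_real_derivative b) F" by simp

lemma log_chain:
  assumes "(g has_real_derivative m) (at 0)" "g 0 > 0"
  shows "((\<lambda>t. log b (g t)) has_real_derivative 1 / (ln b * g 0) * m) (at 0)"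
  using DERIV_chain2[OF DERIV_log[OF assms(2)] assms(1)] by simp

definition Dl :: "nat \<Rightarrow> cmat \<Rightarrow> cmat \<Rightarrow> cvec \<Rightarrow> nat \<Rightarrow> complex \<Rightarrow> real" where
  "Dl n X Y f i z = Dq n X f i z / qf n X f - Dq n Y f i z / qf n Y f"

definition good :: "nat \<Rightarrow> cmat \<Rightarrow> cvec \<Rightarrow> bool" where
  "good n X f \<longleftrightarrow> herm n X \<and> qf n X f > 0"

lemma ratio_deriv:
  assumes "i < n" "good n X f" "good n Y f"
  shows "((\<lambda>t. ratio n X Y (pert f i z t)) has_real_derivative ratio n X Y f * Dl n X Y f i z) (at 0)"
proof -
  have d: "((\<lambda>t. qf n X (pert f i z t) / qf n Y (pert f i z t)) has_real_derivative
     (Dq n X f i z * qf n Y f - qf n X f * Dq n Y f i z) / (qf n Y f * qf n Y f)) (at 0)"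
    using DERIV_divide[OF qf_pert_deriv[OF assms(1)] qf_pert_deriv[OF assms(1)]] assms
    unfolding good_def by simp
  show ?thesis unfolding ratio_def Dl_def
    using assms unfolding good_def by (intro deriv_eq[OF d]) (simp add: field_simps)
qed

lemma ratio_pos: "good n X f \<Longrightarrow> good n Y f \<Longrightarrow> ratio n X Y f > 0"
  unfolding ratio_def good_def by simp

lemma log_ratio_deriv:
  assumes "i < n" "good n X f" "good n Y f"
  shows "((\<lambda>t. log 2 (ratio n X Y (pert f i z t))) has_real_derivative Dl n X Y f i z / ln 2) (at 0)"
proof -
  have "((\<lambda>t. log 2 (ratio n X Y (pert f i z t))) has_real_derivative
     1 / (ln 2 * ratio n X Y f) * (ratio n X Y f * Dl n X Y f i z)) (at 0)"
    using log_chain[OF ratio_deriv[OF assms]] ratio_pos[OF assms(2,3)] by simp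
  then show ?thesis using ratio_pos[OF assms(2,3)] by simp
qed

lemma powr_ratio_deriv:
  assumes "i < n" "good n X f" "good n Y f"
  shows "((\<lambda>t. ratio n X Y (pert f i z t) powr p) has_real_derivative
     p * ratio n X Y f powr p * Dl n X Y f i z) (at 0)"
proof -
  have "((\<lambda>t. ratio n X Y (pert f i z t) powr p) has_real_derivative
     p * ratio n X Y f powr (p - of_nat 1) * (ratio n X Y f * Dl n X Y f i z)) (at 0)"
    using DERIV_fun_powr[OF ratio_deriv[OF assms]] ratio_pos[OF assms(2,3)] by simp
  then show ?thesis using ratio_pos[OF assms(2,3)] by (simp add: powr_diff field_simps)
qed

lemma ln_chain:
  assumes "(g has_real_derivative m) (at 0)" "g 0 > 0"
  shows "((\<lambda>t. ln (g t)) has_real_derivative m / g 0) (at 0)"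
  using DERIV_chain2[OF DERIV_ln_divide[OF assms(2)] assms(1)] by simp

lemma KN_minus: fixes N :: nat and d1 d2 :: "nat \<Rightarrow> real" and v :: cvec and c :: real shows "(\<lambda>a b. KN N d1 v c a b - kron N d2 (outer v) a b) = KN N (\<lambda>b. d1 b - d2 b) v c"
  unfolding KN_def kron_def by (auto simp: fun_eq_iff algebra_simps)

lemma good_KN: "(\<And>b. d b \<ge> 0) \<Longrightarrow> c > 0 \<Longrightarrow> \<exists>a<n. f a \<noteq> 0 \<Longrightarrow> good n (KN N d v c) f"
  unfolding good_def using herm_KN qf_KN_pos by blast

context
  fixes n :: nat and f :: cvec assumes nz: "\<exists>a<n. f a \<noteq> 0"
begin

lemma good_Ac: "c > 0 \<Longrightarrow> good n (Ac N h c k) f"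
proof -
  have "Ac N h c k = KN N (\<lambda>_. 1) (h k) c" unfolding Ac_def KN_def ..
  then show "c > 0 \<Longrightarrow> ?thesis" using good_KN[OF _ _ nz] by simp
qed

lemma good_Bc: "c > 0 \<Longrightarrow> good n (Bc N h c k) f"
proof -
  have "Bc N h c k = KN N (\<lambda>b. 1 - (if b = 0 then 1 else 0)) (h k) c"
    unfolding Bc_def KN_minus[symmetric] unfolding Ac_def KN_def ..
  then show "c > 0 \<Longrightarrow> ?thesis" using good_KN[OF _ _ nz] by simp
qed

lemma good_Ap: "c > 0 \<Longrightarrow> good n (Ap N h c k) f"
proof -
  have "Ap N h c k = KN N (\<lambda>b. if b = 0 then 0 else 1) (h k) c" unfolding Ap_def KN_def ..
  then show "c > 0 \<Longrightarrow> ?thesis" using good_KN[OF _ _ nz] by simp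
qed

lemma good_Bp: "c > 0 \<Longrightarrow> k \<noteq> 0 \<Longrightarrow> good n (Bp N h c k) f"
proof -
  have "Bp N h c k = KN N (\<lambda>b. (if b = 0 then 0 else 1) - (if b = k then 1 else 0)) (h k) c"
    unfolding Bp_def KN_minus[symmetric] unfolding Ap_def KN_def ..
  then show "c > 0 \<Longrightarrow> k \<noteq> 0 \<Longrightarrow> ?thesis" using good_KN[OF _ _ nz] by simp
qed

lemma good_Ae: "c > 0 \<Longrightarrow> good n (Ae N g c e) f"
proof -
  have "Ae N g c e = KN N (\<lambda>_. 1) (g e) c" unfolding Ae_def KN_def ..
  then show "c > 0 \<Longrightarrow> ?thesis" using good_KN[OF _ _ nz] by simp
qed

lemma good_Be: "c > 0 \<Longrightarrow> good n (Be N g c s e) f"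
proof -
  have "Be N g c s e = KN N (\<lambda>b. 1 - (if b = s then 1 else 0)) (g e) c"
    unfolding Be_def KN_minus[symmetric] unfolding Ae_def KN_def ..
  then show "c > 0 \<Longrightarrow> ?thesis" using good_KN[OF _ _ nz] by simp
qed

lemma good_Cu: "c > 0 \<Longrightarrow> good n (Cu N h c u) f"
proof -
  have "Cu N h c u = KN N (\<lambda>b. if b = 0 \<or> b = u then 0 else 1) (h u) c" unfolding Cu_def KN_def ..
  then show "c > 0 \<Longrightarrow> ?thesis" using good_KN[OF _ _ nz] by simp
qed

lemma good_Du: "c > 0 \<Longrightarrow> s \<noteq> 0 \<Longrightarrow> s \<noteq> u \<Longrightarrow> good n (Du N h c s u) f"
proof -
  have "Du N h c s u = KN N (\<lambda>b. (if b = 0 \<or> b = u then 0 else 1) - (if b = s then 1 else 0)) (h u) c"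
    unfolding Du_def KN_minus[symmetric] unfolding Cu_def KN_def ..
  then show "c > 0 \<Longrightarrow> s \<noteq> 0 \<Longrightarrow> s \<noteq> u \<Longrightarrow> ?thesis" using good_KN[OF _ _ nz] by simp
qed

end



definition SWd :: "nat \<Rightarrow> nat \<Rightarrow> (nat \<Rightarrow> cvec) \<Rightarrow> real \<Rightarrow> real \<Rightarrow> cvec \<Rightarrow> nat \<Rightarrow> complex \<Rightarrow> real" where
  "SWd N K h c \<alpha> f i z = (\<Sum>k\<in>{1..K}. (- 1 / (\<alpha> * ln 2)) * wc N K h c \<alpha> f k * Dl (N*(K+1)) (Ac N h c k) (Bc N h c k) f i z)"
definition Wd :: "nat \<Rightarrow> nat \<Rightarrow> nat \<Rightarrow> (nat \<Rightarrow> cvec) \<Rightarrow> (nat \<Rightarrow> cvec) \<Rightarrow> real \<Rightarrow> real \<Rightarrow> real \<Rightarrow> cvec \<Rightarrow> nat \<Rightarrow> complex \<Rightarrow> nat \<Rightarrow> real" where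
  "Wd N K E h g c ce \<alpha> f i z s = (\<Sum>e\<in>{1..E}. (1 / (\<alpha> * ln 2)) * we N K g ce \<alpha> f s e * Dl (N*(K+1)) (Ae N g ce e) (Be N g ce s e) f i z)
   + (\<Sum>u\<in>{1..K} - {s}. (1 / (\<alpha> * ln 2)) * wu N K h c \<alpha> f s u * Dl (N*(K+1)) (Cu N h c u) (Du N h c s u) f i z)"

context
  fixes N K S E :: nat and h g :: "nat \<Rightarrow> cvec" and c ce \<alpha> :: real and f :: cvec and i :: nat and z :: complex
  assumes K0: "K > 0" and E0: "E > 0" and c0: "c > 0" and ce0: "ce > 0" and a0: "\<alpha> > 0"
    and nz: "\<exists>a<N*(K+1). f a \<noteq> 0" and iN: "i < N*(K+1)"
begin

abbreviation "nn \<equiv> N*(K+1)"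
abbreviation "DlC k \<equiv> Dl nn (Ac N h c k) (Bc N h c k) f i z"
abbreviation "DlP k \<equiv> Dl nn (Ap N h c k) (Bp N h c k) f i z"
abbreviation "DlE s e \<equiv> Dl nn (Ae N g ce e) (Be N g ce s e) f i z"
abbreviation "DlU s u \<equiv> Dl nn (Cu N h c u) (Du N h c s u) f i z"

lemma wc_deriv: "((\<lambda>t. wc N K h c \<alpha> (pert f i z t) k) has_real_derivative
   (- 1 / (\<alpha> * ln 2)) * wc N K h c \<alpha> f k * DlC k) (at 0)"
  unfolding wc_def
  by (rule powr_ratio_deriv[OF iN good_Ac[OF nz c0] good_Bc[OF nz c0]])

lemma we_deriv: "((\<lambda>t. we N K g ce \<alpha> (pert f i z t) s e) has_real_derivative
   (1 / (\<alpha> * ln 2)) * we N K g ce \<alpha> f s e * DlE s e) (at 0)"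
  unfolding we_def
  by (rule powr_ratio_deriv[OF iN good_Ae[OF nz ce0] good_Be[OF nz ce0]])

lemma wu_deriv: "s \<noteq> 0 \<Longrightarrow> s \<noteq> u \<Longrightarrow> ((\<lambda>t. wu N K h c \<alpha> (pert f i z t) s u) has_real_derivative
   (1 / (\<alpha> * ln 2)) * wu N K h c \<alpha> f s u * DlU s u) (at 0)"
  unfolding wu_def
  by (rule powr_ratio_deriv[OF iN good_Cu[OF nz c0] good_Du[OF nz c0]])

lemma logP_deriv: "k \<noteq> 0 \<Longrightarrow> ((\<lambda>t. log 2 (ratio nn (Ap N h c k) (Bp N h c k) (pert f i z t))) has_real_derivative
   DlP k / ln 2) (at 0)"
  by (rule log_ratio_deriv[OF iN good_Ap[OF nz c0] good_Bp[OF nz c0]])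

lemma SW_pos: "(\<Sum>k\<in>{1..K}. wc N K h c \<alpha> f k) > 0"
proof -
  have r: "ratio nn (Ac N h c k) (Bc N h c k) f > 0" for k
    by (rule ratio_pos[OF good_Ac[OF nz c0] good_Bc[OF nz c0]])
  have "ratio nn (Ac N h c k) (Bc N h c k) f powr p > 0" for k p using r[of k] by simp
  then show ?thesis unfolding wc_def using K0 by (intro sum_pos) auto
qed

lemma W_pos: "Wsum N K E h g c ce \<alpha> f s > 0"
proof -
  have "(\<Sum>e\<in>{1..E}. we N K g ce \<alpha> f s e) > 0"
  proof -
    have r: "ratio nn (Ae N g ce e) (Be N g ce s e) f > 0" for e
      by (rule ratio_pos[OF good_Ae[OF nz ce0] good_Be[OF nz ce0]])
    have "ratio nn (Ae N g ce e) (Be N g ce s e) f powr p > 0" for e p using r[of e] by simp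
    then show ?thesis unfolding we_def using E0 by (intro sum_pos) auto
  qed
  moreover have "(\<Sum>u\<in>{1..K} - {s}. wu N K h c \<alpha> f s u) \<ge> 0"
    unfolding wu_def by (intro sum_nonneg) auto
  ultimately show ?thesis unfolding Wsum_def by linarith
qed


lemma lnSW_deriv: "((\<lambda>t. ln (\<Sum>k\<in>{1..K}. wc N K h c \<alpha> (pert f i z t) k)) has_real_derivative
   SWd N K h c \<alpha> f i z / (\<Sum>k\<in>{1..K}. wc N K h c \<alpha> f k)) (at 0)"
proof -
  have d: "((\<lambda>t. \<Sum>k\<in>{1..K}. wc N K h c \<alpha> (pert f i z t) k) has_real_derivative SWd N K h c \<alpha> f i z) (at 0)"
    unfolding SWd_def by (rule DERIV_sum) (rule wc_deriv)
  show ?thesis using ln_chain[OF d] SW_pos by simp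
qed

lemma lnW_deriv: "s \<noteq> 0 \<Longrightarrow> ((\<lambda>t. ln (Wsum N K E h g c ce \<alpha> (pert f i z t) s)) has_real_derivative
   Wd N K E h g c ce \<alpha> f i z s / Wsum N K E h g c ce \<alpha> f s) (at 0)"
proof -
  assume s0: "s \<noteq> 0"
  have d: "((\<lambda>t. Wsum N K E h g c ce \<alpha> (pert f i z t) s) has_real_derivative Wd N K E h g c ce \<alpha> f i z s) (at 0)"
    unfolding Wd_def Wsum_def
    by (intro DERIV_add DERIV_sum we_deriv wu_deriv s0) auto
  show ?thesis using ln_chain[OF d] W_pos[of s] by simp
qed

lemma Lobj_deriv: "((\<lambda>t. Lobj N K S E h g c ce \<alpha> (pert f i z t)) has_real_derivative
   - \<alpha> * (SWd N K h c \<alpha> f i z / (\<Sum>k\<in>{1..K}. wc N K h c \<alpha> f k))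
   + (\<Sum>s\<in>{1..S}. DlP s / ln 2 - \<alpha> * (Wd N K E h g c ce \<alpha> f i z s / Wsum N K E h g c ce \<alpha> f s))
   + (\<Sum>m\<in>{S+1..K}. DlP m / ln 2)) (at 0)"
  unfolding Lobj_def
  by (intro DERIV_add DERIV_cmult DERIV_sum DERIV_diff lnSW_deriv lnW_deriv logP_deriv) auto

end



lemma ell_add: "ell z (a + b) = ell z a + ell z b"
  unfolding ell_def by (simp add: distrib_left)
lemma ell_sum: "ell z (\<Sum>k\<in>A. F k) = (\<Sum>k\<in>A. ell z (F k))"
  unfolding ell_def by (simp add: sum_distrib_left)
lemma ell_scale: "ell z (complex_of_real r * w) = r * ell z w"
  unfolding ell_def by (simp add: algebra_simps)

lemma Dq_add: "Dq n (\<lambda>a b. X a b + Y a b) f i z = Dq n X f i z + Dq n Y f i z"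
  unfolding Dq_def mvi_def by (simp add: distrib_right sum.distrib ell_add)
lemma Dq_sum: "Dq n (\<lambda>a b. \<Sum>k\<in>A. F k a b) f i z = (\<Sum>k\<in>A. Dq n (F k) f i z)"
proof -
  have "(\<Sum>j<n. (\<Sum>k\<in>A. F k i j) * f j) = (\<Sum>k\<in>A. \<Sum>j<n. F k i j * f j)"
    by (simp add: sum_distrib_right) (rule sum.swap)
  then show ?thesis unfolding Dq_def mvi_def by (simp add: ell_sum)
qed
lemma Dq_scale: "Dq n (\<lambda>a b. complex_of_real r * X a b) f i z = r * Dq n X f i z"
  unfolding Dq_def mvi_def by (simp add: sum_distrib_left mult.assoc ell_scale[symmetric])
lemma Dq_term: "Dq n (term_mat w n X f) f i z = w / qf n X f * Dq n X f i z"
  unfolding term_mat_def using Dq_scale[of n "w / qf n X f" X f i z] by simp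

lemma AKKT_1: "AKKT N K S E h g c ce \<alpha> lnum f = (\<lambda>i j. lnum * AKKT N K S E h g c ce \<alpha> 1 f i j)"
  unfolding AKKT_def Let_def by simp
lemma BKKT_1: "BKKT N K S E h g c ce \<alpha> lnum f = (\<lambda>i j. lnum * BKKT N K S E h g c ce \<alpha> 1 f i j)"
  unfolding BKKT_def Let_def by simp

lemma Dq_AKKT: "Dq (N*(K+1)) (AKKT N K S E h g c ce \<alpha> 1 f) f i z =
   (\<Sum>k\<in>{1..K}. (wc N K h c \<alpha> f k / (\<Sum>l\<in>{1..K}. wc N K h c \<alpha> f l)) / qf (N*(K+1)) (Ac N h c k) f * Dq (N*(K+1)) (Ac N h c k) f i z)
 + (\<Sum>s\<in>{1..S}. 1 / qf (N*(K+1)) (Ap N h c s) f * Dq (N*(K+1)) (Ap N h c s) f i z)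
 + (\<Sum>s\<in>{1..S}. (1 / Wsum N K E h g c ce \<alpha> f s) *
      ((\<Sum>e\<in>{1..E}. we N K g ce \<alpha> f s e / qf (N*(K+1)) (Be N g ce s e) f * Dq (N*(K+1)) (Be N g ce s e) f i z)
     + (\<Sum>u\<in>{1..K} - {s}. wu N K h c \<alpha> f s u / qf (N*(K+1)) (Du N h c s u) f * Dq (N*(K+1)) (Du N h c s u) f i z)))
 + (\<Sum>m\<in>{S+1..K}. 1 / qf (N*(K+1)) (Ap N h c m) f * Dq (N*(K+1)) (Ap N h c m) f i z)"
  unfolding AKKT_def Let_def mult_1
  by (simp only: Dq_add Dq_sum Dq_scale Dq_term)

lemma Dq_BKKT: "Dq (N*(K+1)) (BKKT N K S E h g c ce \<alpha> 1 f) f i z =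
   (\<Sum>k\<in>{1..K}. (wc N K h c \<alpha> f k / (\<Sum>l\<in>{1..K}. wc N K h c \<alpha> f l)) / qf (N*(K+1)) (Bc N h c k) f * Dq (N*(K+1)) (Bc N h c k) f i z)
 + (\<Sum>s\<in>{1..S}. 1 / qf (N*(K+1)) (Bp N h c s) f * Dq (N*(K+1)) (Bp N h c s) f i z)
 + (\<Sum>s\<in>{1..S}. (1 / Wsum N K E h g c ce \<alpha> f s) *
      ((\<Sum>e\<in>{1..E}. we N K g ce \<alpha> f s e / qf (N*(K+1)) (Ae N g ce e) f * Dq (N*(K+1)) (Ae N g ce e) f i z)
     + (\<Sum>u\<in>{1..K} - {s}. wu N K h c \<alpha> f s u / qf (N*(K+1)) (Cu N h c u) f * Dq (N*(K+1)) (Cu N h c u) f i z)))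
 + (\<Sum>m\<in>{S+1..K}. 1 / qf (N*(K+1)) (Bp N h c m) f * Dq (N*(K+1)) (Bp N h c m) f i z)"
  unfolding BKKT_def Let_def mult_1
  by (simp only: Dq_add Dq_sum Dq_scale Dq_term)



context
  fixes N K S E :: nat and h g :: "nat \<Rightarrow> cvec" and c ce \<alpha> :: real and f :: cvec and i :: nat and z :: complex
  assumes K0: "K > 0" and E0: "E > 0" and c0: "c > 0" and ce0: "ce > 0" and a0: "\<alpha> > 0"
    and nz: "\<exists>a<N*(K+1). f a \<noteq> 0" and iN: "i < N*(K+1)"
begin

abbreviation "n0 \<equiv> N*(K+1)"
abbreviation "Q X \<equiv> qf n0 X f"
abbreviation "DQ X \<equiv> Dq n0 X f i z"
abbreviation "SW \<equiv> (\<Sum>l\<in>{1..K}. wc N K h c \<alpha> f l)"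
abbreviation "W s \<equiv> Wsum N K E h g c ce \<alpha> f s"

lemma ln2: "ln (2::real) > 0" by simp

lemma P1: "ln 2 * (- \<alpha> * (SWd N K h c \<alpha> f i z / SW)) =
   (\<Sum>k\<in>{1..K}. (wc N K h c \<alpha> f k / SW) / Q (Ac N h c k) * DQ (Ac N h c k))
 - (\<Sum>k\<in>{1..K}. (wc N K h c \<alpha> f k / SW) / Q (Bc N h c k) * DQ (Bc N h c k))"
proof -
  have SWp: "SW > 0" by (rule SW_pos[OF K0 E0 c0 ce0 a0 nz iN])
  have "ln 2 * (- \<alpha> * (SWd N K h c \<alpha> f i z / SW)) = (\<Sum>k\<in>{1..K}. ln 2 * (- \<alpha> * ((- 1 / (\<alpha> * ln 2)) * wc N K h c \<alpha> f k * Dl n0 (Ac N h c k) (Bc N h c k) f i z / SW)))"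
    unfolding SWd_def by (simp add: sum_distrib_left sum_divide_distrib)
  also have "\<dots> = (\<Sum>k\<in>{1..K}. (wc N K h c \<alpha> f k / SW) / Q (Ac N h c k) * DQ (Ac N h c k) - (wc N K h c \<alpha> f k / SW) / Q (Bc N h c k) * DQ (Bc N h c k))"
    using a0 SWp ln2 by (intro sum.cong refl) (simp add: Dl_def field_simps)
  finally show ?thesis by (simp add: sum_subtractf)
qed

lemma alg1: "(p::real) - (x1 - x2 + (y1 - y2)) / w = (p + (1 / w) * (x2 + y2)) - (1 / w) * (x1 + y1)"
  by (simp add: diff_divide_distrib add_divide_distrib algebra_simps)

lemma lnalpha_sum: "ln 2 * \<alpha> * (\<Sum>e\<in>A. (1 / (\<alpha> * ln 2)) * F e) = (\<Sum>e\<in>A. F e)"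
  using a0 ln2 by (simp add: sum_divide_distrib[symmetric])

lemma P2s:
  assumes s0: "s \<noteq> 0"
  shows "ln 2 * (Dl n0 (Ap N h c s) (Bp N h c s) f i z / ln 2 - \<alpha> * (Wd N K E h g c ce \<alpha> f i z s / W s)) =
   (1 / Q (Ap N h c s) * DQ (Ap N h c s) + (1 / W s) *
      ((\<Sum>e\<in>{1..E}. we N K g ce \<alpha> f s e / Q (Be N g ce s e) * DQ (Be N g ce s e))
     + (\<Sum>u\<in>{1..K} - {s}. wu N K h c \<alpha> f s u / Q (Du N h c s u) * DQ (Du N h c s u))))
 - (1 / Q (Bp N h c s) * DQ (Bp N h c s) + (1 / W s) *
      ((\<Sum>e\<in>{1..E}. we N K g ce \<alpha> f s e / Q (Ae N g ce e) * DQ (Ae N g ce e))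
     + (\<Sum>u\<in>{1..K} - {s}. wu N K h c \<alpha> f s u / Q (Cu N h c u) * DQ (Cu N h c u))))"
proof -
  have A: "ln 2 * \<alpha> * (\<Sum>e\<in>{1..E}. (1 / (\<alpha> * ln 2)) * we N K g ce \<alpha> f s e * Dl n0 (Ae N g ce e) (Be N g ce s e) f i z)
     = (\<Sum>e\<in>{1..E}. we N K g ce \<alpha> f s e / Q (Ae N g ce e) * DQ (Ae N g ce e))
     - (\<Sum>e\<in>{1..E}. we N K g ce \<alpha> f s e / Q (Be N g ce s e) * DQ (Be N g ce s e))"
    unfolding mult.assoc[of "1 / (\<alpha> * ln 2)"] lnalpha_sum sum_subtractf[symmetric]
    by (intro sum.cong refl) (simp add: Dl_def algebra_simps)
  have B: "ln 2 * \<alpha> * (\<Sum>u\<in>{1..K} - {s}. (1 / (\<alpha> * ln 2)) * wu N K h c \<alpha> f s u * Dl n0 (Cu N h c u) (Du N h c s u) f i z)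
     = (\<Sum>u\<in>{1..K} - {s}. wu N K h c \<alpha> f s u / Q (Cu N h c u) * DQ (Cu N h c u))
     - (\<Sum>u\<in>{1..K} - {s}. wu N K h c \<alpha> f s u / Q (Du N h c s u) * DQ (Du N h c s u))"
    unfolding mult.assoc[of "1 / (\<alpha> * ln 2)"] lnalpha_sum sum_subtractf[symmetric]
    by (intro sum.cong refl) (simp add: Dl_def algebra_simps)
  have W: "ln 2 * \<alpha> * Wd N K E h g c ce \<alpha> f i z s = (\<Sum>e\<in>{1..E}. we N K g ce \<alpha> f s e / Q (Ae N g ce e) * DQ (Ae N g ce e)) - (\<Sum>e\<in>{1..E}. we N K g ce \<alpha> f s e / Q (Be N g ce s e) * DQ (Be N g ce s e)) + ((\<Sum>u\<in>{1..K} - {s}. wu N K h c \<alpha> f s u / Q (Cu N h c u) * DQ (Cu N h c u)) - (\<Sum>u\<in>{1..K} - {s}. wu N K h c \<alpha> f s u / Q (Du N h c s u) * DQ (Du N h c s u)))"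
    unfolding Wd_def distrib_left[of "ln 2 * \<alpha>"] A B ..
  have "ln 2 * (Dl n0 (Ap N h c s) (Bp N h c s) f i z / ln 2 - \<alpha> * (Wd N K E h g c ce \<alpha> f i z s / W s))
     = Dl n0 (Ap N h c s) (Bp N h c s) f i z - (ln 2 * \<alpha> * Wd N K E h g c ce \<alpha> f i z s) / W s"
    using ln2 by (simp add: field_simps)
  also have "\<dots> = (Dl n0 (Ap N h c s) (Bp N h c s) f i z + (1 / W s) * ((\<Sum>e\<in>{1..E}. we N K g ce \<alpha> f s e / Q (Be N g ce s e) * DQ (Be N g ce s e)) + (\<Sum>u\<in>{1..K} - {s}. wu N K h c \<alpha> f s u / Q (Du N h c s u) * DQ (Du N h c s u)))) - (1 / W s) * ((\<Sum>e\<in>{1..E}. we N K g ce \<alpha> f s e / Q (Ae N g ce e) * DQ (Ae N g ce e)) + (\<Sum>u\<in>{1..K} - {s}. wu N K h c \<alpha> f s u / Q (Cu N h c u) * DQ (Cu N h c u)))"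
    unfolding W by (rule alg1)
  finally show ?thesis by (simp add: Dl_def algebra_simps)
qed

lemma total: "ln 2 * (- \<alpha> * (SWd N K h c \<alpha> f i z / SW)
   + (\<Sum>s\<in>{1..S}. Dl n0 (Ap N h c s) (Bp N h c s) f i z / ln 2 - \<alpha> * (Wd N K E h g c ce \<alpha> f i z s / W s))
   + (\<Sum>m\<in>{S+1..K}. Dl n0 (Ap N h c m) (Bp N h c m) f i z / ln 2))
   = Dq n0 (AKKT N K S E h g c ce \<alpha> 1 f) f i z - Dq n0 (BKKT N K S E h g c ce \<alpha> 1 f) f i z"
proof -
  have S2: "ln 2 * (\<Sum>s\<in>{1..S}. Dl n0 (Ap N h c s) (Bp N h c s) f i z / ln 2 - \<alpha> * (Wd N K E h g c ce \<alpha> f i z s / W s))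
    = ((\<Sum>s\<in>{1..S}. 1 / Q (Ap N h c s) * DQ (Ap N h c s)) + (\<Sum>s\<in>{1..S}. (1 / W s) *
      ((\<Sum>e\<in>{1..E}. we N K g ce \<alpha> f s e / Q (Be N g ce s e) * DQ (Be N g ce s e))
     + (\<Sum>u\<in>{1..K} - {s}. wu N K h c \<alpha> f s u / Q (Du N h c s u) * DQ (Du N h c s u)))))
    - ((\<Sum>s\<in>{1..S}. 1 / Q (Bp N h c s) * DQ (Bp N h c s)) + (\<Sum>s\<in>{1..S}. (1 / W s) *
      ((\<Sum>e\<in>{1..E}. we N K g ce \<alpha> f s e / Q (Ae N g ce e) * DQ (Ae N g ce e))
     + (\<Sum>u\<in>{1..K} - {s}. wu N K h c \<alpha> f s u / Q (Cu N h c u) * DQ (Cu N h c u)))))"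
    unfolding sum_distrib_left sum.distrib[symmetric] sum_subtractf[symmetric]
    by (intro sum.cong refl P2s) auto
  have S3: "ln 2 * (\<Sum>m\<in>{S+1..K}. Dl n0 (Ap N h c m) (Bp N h c m) f i z / ln 2)
    = (\<Sum>m\<in>{S+1..K}. 1 / Q (Ap N h c m) * DQ (Ap N h c m)) - (\<Sum>m\<in>{S+1..K}. 1 / Q (Bp N h c m) * DQ (Bp N h c m))"
    unfolding sum_distrib_left sum_subtractf[symmetric]
    using ln2 by (intro sum.cong refl) (simp add: Dl_def)
  show ?thesis
    unfolding Dq_AKKT Dq_BKKT distrib_left[of "ln 2"] P1 S2 S3 by simp
qed

end


lemma inv_apply:
  assumes "is_inverse n Xi X" "i < n"
  shows "mvec n X (mvec n Xi y) i = y i"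
proof -
  have "mvec n X (mvec n Xi y) i = (\<Sum>k<n. \<Sum>j<n. X i k * Xi k j * y j)"
    unfolding mvec_def by (simp add: sum_distrib_left mult.assoc)
  also have "\<dots> = (\<Sum>j<n. \<Sum>k<n. X i k * Xi k j * y j)" by (rule sum.swap)
  also have "\<dots> = (\<Sum>j<n. (\<Sum>k<n. X i k * Xi k j) * y j)" by (simp add: sum_distrib_right)
  also have "\<dots> = (\<Sum>j<n. (if i = j then y j else 0))"
    using assms unfolding is_inverse_def by (intro sum.cong refl) auto
  also have "\<dots> = y i" using assms(2) by simp
  finally show ?thesis .
qed

lemma mvec_cong: "(\<And>k. k < n \<Longrightarrow> v k = w k) \<Longrightarrow> mvec n X v i = mvec n X w i"
  unfolding mvec_def by (intro sum.cong refl) auto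

theorem lemma1:
  fixes N K S E :: nat
    and h g :: "nat \<Rightarrow> nat \<Rightarrow> complex"
    and \<sigma>2 \<sigma>e2 P \<alpha> :: real
    and lnum lden :: complex
    and f :: "nat \<Rightarrow> complex"
    and Binv :: "nat \<Rightarrow> nat \<Rightarrow> complex"
  assumes "N > 0" "K > 0" "S > 0" "E > 0" "S \<le> K"
    and "\<sigma>2 > 0" "\<sigma>e2 > 0" "P > 0" "\<alpha> > 0"
    and "\<exists>i < N*(K+1). f i \<noteq> 0"
    and "complex_of_real (lam N K S E h g (\<sigma>2/P) (\<sigma>e2/P) \<alpha> f) = lnum / lden"
    and "lam N K S E h g (\<sigma>2/P) (\<sigma>e2/P) \<alpha> f \<noteq> 0"
    and "is_inverse (N*(K+1)) Binv (BKKT N K S E h g (\<sigma>2/P) (\<sigma>e2/P) \<alpha> lden f)"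
    and "\<forall>i < N*(K+1).
           mvec (N*(K+1)) Binv (mvec (N*(K+1)) (AKKT N K S E h g (\<sigma>2/P) (\<sigma>e2/P) \<alpha> lnum f) f) i
           = complex_of_real (lam N K S E h g (\<sigma>2/P) (\<sigma>e2/P) \<alpha> f) * f i"
  shows "has_wirtinger_conj_grad (N*(K+1)) (Lobj N K S E h g (\<sigma>2/P) (\<sigma>e2/P) \<alpha>) f (\<lambda>_. 0)"
proof -
  define n where "n = N*(K+1)"
  define c where "c = \<sigma>2/P"
  define ce where "ce = \<sigma>e2/P"
  define lm where "lm = lam N K S E h g c ce \<alpha> f"
  have c0: "c > 0" unfolding c_def using assms by simp
  have ce0: "ce > 0" unfolding ce_def using assms by simp
  have lm: "complex_of_real lm = lnum / lden" "lm \<noteq> 0"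
    using assms(11,12) unfolding lm_def c_def ce_def by auto
  have lden0: "lden \<noteq> 0" using lm by auto
  have lnum0: "lnum \<noteq> 0" using lm by auto
  have lmd: "complex_of_real lm * lden = lnum" using lm(1) lden0 by simp
  define A where "A = AKKT N K S E h g c ce \<alpha> lnum f"
  define B where "B = BKKT N K S E h g c ce \<alpha> lden f"
  have inv: "is_inverse n Binv B" using assms(13) unfolding n_def B_def c_def ce_def .
  have eig: "\<And>i. i < n \<Longrightarrow> mvec n Binv (mvec n A f) i = complex_of_real lm * f i"
    using assms(14) unfolding n_def A_def c_def ce_def lm_def by blast
  have eqmv: "mvi n (AKKT N K S E h g c ce \<alpha> 1 f) f i = mvi n (BKKT N K S E h g c ce \<alpha> 1 f) f i"
    if i: "i < n" for i
  proof -
    have "mvec n A f i = mvec n B (mvec n Binv (mvec n A f)) i"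
      using inv_apply[OF inv i] by simp
    also have "\<dots> = mvec n B (\<lambda>k. complex_of_real lm * f k) i"
      by (rule mvec_cong) (rule eig)
    also have "\<dots> = complex_of_real lm * mvec n B f i"
      unfolding mvec_def by (simp add: sum_distrib_left mult.left_commute)
    finally have "mvec n A f i = complex_of_real lm * mvec n B f i" .
    moreover have "mvec n A f i = lnum * mvi n (AKKT N K S E h g c ce \<alpha> 1 f) f i"
      unfolding A_def mvec_def mvi_def by (subst AKKT_1) (simp add: sum_distrib_left mult.assoc)
    moreover have "mvec n B f i = lden * mvi n (BKKT N K S E h g c ce \<alpha> 1 f) f i"
      unfolding B_def mvec_def mvi_def by (subst BKKT_1) (simp add: sum_distrib_left mult.assoc)
    ultimately have "lnum * mvi n (AKKT N K S E h g c ce \<alpha> 1 f) f i = lnum * mvi n (BKKT N K S E h g c ce \<alpha> 1 f) f i"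
      using lmd by (simp add: mult.assoc[symmetric])
    then show ?thesis using lnum0 by simp
  qed
  have der: "((\<lambda>t. Lobj N K S E h g c ce \<alpha> (pert f i z t)) has_real_derivative 0) (at 0)"
    if i: "i < n" for i z
  proof -
    have nz: "\<exists>a<N*(K+1). f a \<noteq> 0" using assms(10) .
    have iN: "i < N*(K+1)" using i unfolding n_def .
    note d = Lobj_deriv[OF assms(2) assms(4) c0 ce0 assms(9) nz iN, where S=S and z=z]
    note t = total[OF assms(2) assms(4) c0 ce0 assms(9) nz iN, where S=S and z=z]
    have "Dq n (AKKT N K S E h g c ce \<alpha> 1 f) f i z = Dq n (BKKT N K S E h g c ce \<alpha> 1 f) f i z"
      unfolding Dq_def eqmv[OF i] ..
    then have "ln 2 * (- \<alpha> * (SWd N K h c \<alpha> f i z / (\<Sum>k\<in>{1..K}. wc N K h c \<alpha> f k))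
     + (\<Sum>s\<in>{1..S}. Dl (N*(K+1)) (Ap N h c s) (Bp N h c s) f i z / ln 2 - \<alpha> * (Wd N K E h g c ce \<alpha> f i z s / Wsum N K E h g c ce \<alpha> f s))
     + (\<Sum>m\<in>{S+1..K}. Dl (N*(K+1)) (Ap N h c m) (Bp N h c m) f i z / ln 2)) = 0"
      using t unfolding n_def by simp
    then have "- \<alpha> * (SWd N K h c \<alpha> f i z / (\<Sum>k\<in>{1..K}. wc N K h c \<alpha> f k))
     + (\<Sum>s\<in>{1..S}. Dl (N*(K+1)) (Ap N h c s) (Bp N h c s) f i z / ln 2 - \<alpha> * (Wd N K E h g c ce \<alpha> f i z s / Wsum N K E h g c ce \<alpha> f s))
     + (\<Sum>m\<in>{S+1..K}. Dl (N*(K+1)) (Ap N h c m) (Bp N h c m) f i z / ln 2) = 0"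
      by simp
    from deriv_eq[OF d[of h g] this] show ?thesis .
  qed
  show ?thesis
    unfolding has_wirtinger_conj_grad_def
  proof (intro allI impI)
    fix i assume i: "i < N*(K+1)"
    have e1: "(\<lambda>t. Lobj N K S E h g (\<sigma>2/P) (\<sigma>e2/P) \<alpha> (f(i := f i + complex_of_real t)))
       = (\<lambda>t. Lobj N K S E h g c ce \<alpha> (pert f i 1 t))"
      unfolding pert_def c_def ce_def by simp
    have e2: "(\<lambda>t. Lobj N K S E h g (\<sigma>2/P) (\<sigma>e2/P) \<alpha> (f(i := f i + \<i> * complex_of_real t)))
       = (\<lambda>t. Lobj N K S E h g c ce \<alpha> (pert f i \<i> t))"
      unfolding pert_def c_def ce_def by simp
    show "\<exists>dx dy. ((\<lambda>t. Lobj N K S E h g (\<sigma>2/P) (\<sigma>e2/P) \<alpha> (f(i := f i + complex_of_real t))) has_real_derivative dx) (at 0) \<and>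
      ((\<lambda>t. Lobj N K S E h g (\<sigma>2/P) (\<sigma>e2/P) \<alpha> (f(i := f i + \<i> * complex_of_real t))) has_real_derivative dy) (at 0) \<and>
      0 = (complex_of_real dx + \<i> * complex_of_real dy) / 2"
      using der[of i 1] der[of i \<i>] i unfolding e1 e2 n_def by (intro exI[of _ 0]) simp
  qed
qed

end
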